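(* Let $Y$ be a shift-invariant subspace of $\mathcal B_0$. Then the closure of $Y$ in $\mathcal B_0$ (with respect to $\|\cdot\|_{\mathcal B}$) equals $\mathcal B_0\cap\overline{Y}^{H^\infty}$, where $\overline Y^{H^\infty}$ is the closure of $Y$ in $H^\infty(\mathbb C_+)$ with the sup norm. Likewise, if $Z$ is a shift-invariant subspace of $\mathcal B$ containing the constant functions, then the closure of $Z$ in $\mathcal B$ equals $\mathcal B\cap\overline Z^{H^\infty}$.
   Context: $\mathbb C_+=\{z:\Re z>0\}$. $\mathcal B$ is the space of holomorphic $f$ on $\mathbb C_+$ with $\|f\|_{\mathcal B_0}:=\int_0^\infty\sup_{\beta\in\mathbb R}|f'(\alpha+i\beta)|\,d\alpha<\infty$; such $f$ are bounded, $f(\infty):=\lim_{\Re z\to\infty}f(z)$ exists; $\mathcal B$ is a Banach algebra with norm $\|f\|_{\mathcal B}=\|f\|_\infty+\|f\|_{\mathcal B_0}$, and $\mathcal B_0=\{f\in\mathcal B:f(\infty)=0\}$. A subspace $Y$ of $\mathcal B$ is shift-invariant if $T(a)Y\subset Y$ for all $a\ge0$, where $(T(a)f)(z)=f(z+a)$. *)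

theory Defs
  imports "HOL-Complex_Analysis.Complex_Analysis"
begin

text \<open>Functions on the right half-plane are represented as total functions
  complex \<Rightarrow> complex which vanish off the half-plane (canonical representatives).\<close>

definition RHP :: "complex set" where
  "RHP = {z. Re z > 0}"

definition on_RHP :: "(complex \<Rightarrow> complex) \<Rightarrow> bool" where
  "on_RHP f \<longleftrightarrow> f holomorphic_on RHP \<and> (\<forall>z. z \<notin> RHP \<longrightarrow> f z = 0)"

definition sup_norm :: "(complex \<Rightarrow> complex) \<Rightarrow> ennreal" where
  "sup_norm f = (SUP z\<in>RHP. ennreal (norm (f z)))"

definition B0_norm :: "(complex \<Rightarrow> complex) \<Rightarrow> ennreal" where
  "B0_norm f = (\<integral>\<^sup>+ \<alpha>. (SUP \<beta>::real. ennreal (norm (deriv f (Complex \<alpha> \<beta>))))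
                   * indicator {0<..} \<alpha> \<partial>lborel)"

definition B_norm :: "(complex \<Rightarrow> complex) \<Rightarrow> ennreal" where
  "B_norm f = sup_norm f + B0_norm f"

definition Hinf :: "(complex \<Rightarrow> complex) set" where
  "Hinf = {f. on_RHP f \<and> sup_norm f < \<infinity>}"

definition Bsp :: "(complex \<Rightarrow> complex) set" where
  "Bsp = {f. on_RHP f \<and> B0_norm f < \<infinity>}"

text \<open>f(\<infinity>) = 0 : limit as Re z \<rightarrow> \<infinity>.\<close>
definition B0sp :: "(complex \<Rightarrow> complex) set" where
  "B0sp = {f\<in>Bsp. (f \<longlongrightarrow> 0) (filtercomap Re at_top)}"

definition shift :: "real \<Rightarrow> (complex \<Rightarrow> complex) \<Rightarrow> (complex \<Rightarrow> complex)" where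
  "shift a f = (\<lambda>z. if Re z > 0 then f (z + of_real a) else 0)"

definition const_fun :: "complex \<Rightarrow> (complex \<Rightarrow> complex)" where
  "const_fun c = (\<lambda>z. if Re z > 0 then c else 0)"

definition is_subspace :: "(complex \<Rightarrow> complex) set \<Rightarrow> bool" where
  "is_subspace Y \<longleftrightarrow> (\<lambda>z. 0) \<in> Y \<and> (\<forall>f\<in>Y. \<forall>g\<in>Y. (\<lambda>z. f z + g z) \<in> Y)
      \<and> (\<forall>c. \<forall>f\<in>Y. (\<lambda>z. c * f z) \<in> Y)"

definition shift_invariant :: "(complex \<Rightarrow> complex) set \<Rightarrow> bool" where
  "shift_invariant Y \<longleftrightarrow> (\<forall>a\<ge>0. \<forall>f\<in>Y. shift a f \<in> Y)"

definition B_closure_in :: "(complex \<Rightarrow> complex) set \<Rightarrow> (complex \<Rightarrow> complex) set \<Rightarrow> (complex \<Rightarrow> complex) set" where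
  "B_closure_in S Y = {f\<in>S. \<forall>\<epsilon>>0. \<exists>g\<in>Y. B_norm (\<lambda>z. f z - g z) < ennreal \<epsilon>}"

definition Hinf_closure :: "(complex \<Rightarrow> complex) set \<Rightarrow> (complex \<Rightarrow> complex) set" where
  "Hinf_closure Y = {f\<in>Hinf. \<forall>\<epsilon>>0. \<exists>g\<in>Y. sup_norm (\<lambda>z. f z - g z) < ennreal \<epsilon>}"

end

theory Submission
  imports Defs
begin

definition phi :: "(complex \<Rightarrow> complex) \<Rightarrow> real \<Rightarrow> ennreal" where
  "phi f \<alpha> = (SUP \<beta>::real. ennreal (norm (deriv f (Complex \<alpha> \<beta>))))"

lemma B0_norm_phi: "B0_norm f = (\<integral>\<^sup>+ \<alpha>. phi f \<alpha> * indicator {0<..} \<alpha> \<partial>lborel)"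
  by (simp add: B0_norm_def phi_def)

lemma open_RHP: "open RHP"
  unfolding RHP_def by (simp add: open_halfspace_Re_gt)

lemma in_RHP: "z \<in> RHP \<longleftrightarrow> Re z > 0" by (simp add: RHP_def)

lemma Complex_in_RHP: "Complex a b \<in> RHP \<longleftrightarrow> a > 0" by (simp add: RHP_def)

lemma RHP_shift: "z \<in> RHP \<Longrightarrow> a \<ge> 0 \<Longrightarrow> z + of_real a \<in> RHP" by (simp add: RHP_def)

lemma phi_ge: "ennreal (norm (deriv f (Complex \<alpha> \<beta>))) \<le> phi f \<alpha>"
  unfolding phi_def by (rule SUP_upper) auto

lemma phi_ge': "ennreal (norm (deriv f z)) \<le> phi f (Re z)"
  using phi_ge[of f "Re z" "Im z"] by simp

lemma cauchy_est:
  assumes hol: "f holomorphic_on RHP" and bd: "\<And>w. w \<in> RHP \<Longrightarrow> norm (f w) \<le> M"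
    and z: "z \<in> RHP"
  shows "norm ((deriv ^^ n) f z) \<le> fact n * M / (Re z / 2) ^ n"
proof (rule Cauchy_inequality)
  have sub: "cball z (Re z / 2) \<subseteq> RHP"
  proof
    fix x assume "x \<in> cball z (Re z / 2)"
    then have "norm (z - x) \<le> Re z / 2" by (simp add: dist_norm)
    moreover have "\<bar>Re (z - x)\<bar> \<le> norm (z - x)" by (rule abs_Re_le_cmod)
    ultimately show "x \<in> RHP" using z by (auto simp: RHP_def)
  qed
  show "f holomorphic_on ball z (Re z / 2)"
    using hol sub ball_subset_cball holomorphic_on_subset by blast
  show "continuous_on (cball z (Re z / 2)) f"
    using holomorphic_on_imp_continuous_on[OF hol] sub continuous_on_subset by blast
  show "0 < Re z / 2" using z by (simp add: RHP_def)
  fix x assume "norm (z - x) = Re z / 2"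
  then have "x \<in> cball z (Re z / 2)" by (simp add: dist_norm)
  then have "x \<in> RHP"
    using z abs_Re_le_cmod[of "z - x"] by (auto simp: RHP_def dist_norm)
  then show "norm (f x) \<le> M" by (rule bd)
qed

lemma cauchy1:
  assumes hol: "f holomorphic_on RHP" and bd: "\<And>w. w \<in> RHP \<Longrightarrow> norm (f w) \<le> M"
    and z: "z \<in> RHP"
  shows "norm (deriv f z) \<le> 2 * M / Re z"
  using cauchy_est[OF hol bd z, of 1] by (simp add: mult.commute)

lemma cauchy2:
  assumes hol: "f holomorphic_on RHP" and bd: "\<And>w. w \<in> RHP \<Longrightarrow> norm (f w) \<le> M"
    and z: "z \<in> RHP"
  shows "norm (deriv (deriv f) z) \<le> 8 * M / (Re z)^2"
  using cauchy_est[OF hol bd z, of 2] by (simp add: numeral_2_eq_2 power2_eq_square field_simps)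

lemma hol_deriv: "f holomorphic_on RHP \<Longrightarrow> deriv f holomorphic_on RHP"
  using holomorphic_deriv open_RHP by blast

lemma has_deriv_RHP: "f holomorphic_on RHP \<Longrightarrow> z \<in> RHP \<Longrightarrow> (f has_field_derivative deriv f z) (at z within T)"
  using holomorphic_derivI open_RHP by blast

lemma phi_rat:
  assumes hol: "f holomorphic_on RHP" and a: "\<alpha> > 0"
  shows "phi f \<alpha> = (SUP q\<in>\<rat>. ennreal (norm (deriv f (Complex \<alpha> q))))"
proof (rule antisym)
  show "(SUP q\<in>\<rat>. ennreal (norm (deriv f (Complex \<alpha> q)))) \<le> phi f \<alpha>"
    by (rule SUP_least) (rule phi_ge)
  show "phi f \<alpha> \<le> (SUP q\<in>\<rat>. ennreal (norm (deriv f (Complex \<alpha> q))))"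
    unfolding phi_def
  proof (rule SUP_least)
    fix \<beta> :: real
    define S where "S = (SUP q\<in>\<rat>. ennreal (norm (deriv f (Complex \<alpha> q))))"
    have "\<exists>r\<in>\<rat>. \<beta> < r \<and> r < \<beta> + 1 / (Suc n)" for n :: nat
      by (rule Rats_dense_in_real) simp
    then obtain r where r: "\<And>n. r n \<in> \<rat> \<and> \<beta> < r n \<and> r n < \<beta> + 1 / (Suc n)" by metis
    have "r \<longlonglongrightarrow> \<beta>"
    proof (rule real_tendsto_sandwich[of "\<lambda>n. \<beta>" _ _ "\<lambda>n. \<beta> + 1 / Suc n"])
      show "\<forall>\<^sub>F n in sequentially. \<beta> \<le> r n" using r by (simp add: less_imp_le)
      show "\<forall>\<^sub>F n in sequentially. r n \<le> \<beta> + 1 / Suc n" using r by (simp add: less_imp_le)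
      show "(\<lambda>n. \<beta>) \<longlonglongrightarrow> \<beta>" by simp
      show "(\<lambda>n. \<beta> + 1 / real (Suc n)) \<longlonglongrightarrow> \<beta>"
        using tendsto_add[OF tendsto_const[of \<beta>] LIMSEQ_inverse_real_of_nat] 
        by (simp add: inverse_eq_divide)
    qed
    moreover have "isCont (\<lambda>y. deriv f (Complex \<alpha> y)) \<beta>"
    proof -
      have "continuous_on RHP (deriv f)"
        using hol_deriv[OF hol] holomorphic_on_imp_continuous_on by blast
      then have c: "isCont (deriv f) (Complex \<alpha> \<beta>)"
        using open_RHP a by (simp add: continuous_on_eq_continuous_at Complex_in_RHP)
      have e: "(\<lambda>y. Complex \<alpha> y) = (\<lambda>y. of_real \<alpha> + \<i> * of_real y)"
        by (auto simp: complex_eq_iff)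
      have "isCont (\<lambda>y. Complex \<alpha> y) \<beta>" unfolding e by (intro continuous_intros)
      then show ?thesis using c isCont_o2 by blast
    qed
    ultimately have "(\<lambda>n. deriv f (Complex \<alpha> (r n))) \<longlonglongrightarrow> deriv f (Complex \<alpha> \<beta>)"
      using isCont_tendsto_compose by blast
    then have lim: "(\<lambda>n. ennreal (norm (deriv f (Complex \<alpha> (r n))))) \<longlonglongrightarrow> ennreal (norm (deriv f (Complex \<alpha> \<beta>)))"
      by (intro tendsto_ennrealI tendsto_norm)
    moreover have "\<forall>n. ennreal (norm (deriv f (Complex \<alpha> (r n)))) \<le> S"
      unfolding S_def using r by (auto intro: SUP_upper)
    then show "ennreal (norm (deriv f (Complex \<alpha> \<beta>))) \<le> S"
      using LIMSEQ_le_const2[OF lim] by blast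
  qed
qed

lemma phi_meas:
  assumes hol: "f holomorphic_on RHP"
  shows "(\<lambda>\<alpha>. phi f \<alpha> * indicator {0<..} \<alpha>) \<in> borel_measurable borel"
proof -
  have eq: "(\<lambda>\<alpha>. phi f \<alpha> * indicator {0<..} \<alpha>) =
     (\<lambda>\<alpha>. SUP q\<in>\<rat>. ennreal (norm (indicator {0<..} \<alpha> *\<^sub>R deriv f (Complex \<alpha> q))))"
  proof
    fix \<alpha> :: real
    show "phi f \<alpha> * indicator {0<..} \<alpha> =
       (SUP q\<in>\<rat>. ennreal (norm (indicator {0<..} \<alpha> *\<^sub>R deriv f (Complex \<alpha> q))))"
    proof (cases "\<alpha> > 0")
      case True then show ?thesis using phi_rat[OF hol True] by simp
    next
      case False
      have "\<rat> \<noteq> {}" using Rats_0 by blast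
      then show ?thesis using False SUP_const[OF \<open>\<rat> \<noteq> {}\<close>, of 0] by simp
    qed
  qed
  have "continuous_on {0<..} (\<lambda>\<alpha>. deriv f (Complex \<alpha> q))" for q
  proof -
    have "continuous_on RHP (deriv f)"
      using hol_deriv[OF hol] holomorphic_on_imp_continuous_on by blast
    moreover have "continuous_on {0<..} (\<lambda>\<alpha>::real. Complex \<alpha> q)"
      by (intro continuous_intros continuous_on_Complex)
    moreover have "(\<lambda>\<alpha>. Complex \<alpha> q) ` {0<..} \<subseteq> RHP" by (auto simp: Complex_in_RHP)
    ultimately show ?thesis using continuous_on_compose2 by blast
  qed
  then have "(\<lambda>\<alpha>. indicator {0<..} \<alpha> *\<^sub>R deriv f (Complex \<alpha> q)) \<in> borel_measurable borel" for q
    by (intro borel_measurable_continuous_on_indicator) auto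
  then have "(\<lambda>\<alpha>. ennreal (norm (indicator {0<..} \<alpha> *\<^sub>R deriv f (Complex \<alpha> q)))) \<in> borel_measurable borel" for q
    by measurable
  then show ?thesis unfolding eq by (intro borel_measurable_SUP countable_rat)
qed

lemma phi_meas_ind:
  assumes hol: "f holomorphic_on RHP" and S: "S \<subseteq> {0<..}" "S \<in> sets borel"
  shows "(\<lambda>\<alpha>. phi f \<alpha> * indicator S \<alpha>) \<in> borel_measurable borel"
proof -
  have "(\<lambda>\<alpha>. phi f \<alpha> * indicator S \<alpha>) = (\<lambda>\<alpha>. (phi f \<alpha> * indicator {0<..} \<alpha>) * indicator S \<alpha>)"
    using S by (auto simp: indicator_def fun_eq_iff)
  then show ?thesis using phi_meas[OF hol] S by simp
qed

lemma IB:
  assumes hol: "f holomorphic_on RHP" and r: "0 < r" "r \<le> s"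
  shows "ennreal (norm (f (Complex s \<beta>) - f (Complex r \<beta>))) \<le> (\<integral>\<^sup>+ t. phi f t * indicator {r..s} t \<partial>lborel)"
proof -
  define \<gamma> where "\<gamma> = (\<lambda>t. f (Complex t \<beta>))"
  define \<gamma>' where "\<gamma>' = (\<lambda>t. deriv f (Complex t \<beta>))"
  have e: "(\<lambda>y. Complex y \<beta>) = (\<lambda>y. of_real y + \<i> * of_real \<beta>)"
    by (auto simp: complex_eq_iff)
  have der: "(\<gamma> has_vector_derivative \<gamma>' t) (at t within {r..s})" if t: "t \<in> {r..s}" for t
  proof -
    have "((\<lambda>y. Complex y \<beta>) has_vector_derivative 1) (at t within {r..s})"
      unfolding e by (auto intro!: derivative_eq_intros)
    moreover have "(f has_field_derivative deriv f (Complex t \<beta>)) (at (Complex t \<beta>) within (\<lambda>y. Complex y \<beta>) ` {r..s})"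
      using has_deriv_RHP[OF hol] t r by (simp add: Complex_in_RHP)
    ultimately have "((f \<circ> (\<lambda>y. Complex y \<beta>)) has_vector_derivative (1 * deriv f (Complex t \<beta>))) (at t within {r..s})"
      by (rule field_vector_diff_chain_within)
    then show ?thesis by (simp add: \<gamma>_def \<gamma>'_def o_def)
  qed
  have ftc: "(\<gamma>' has_integral (\<gamma> s - \<gamma> r)) {r..s}"
    using r der by (intro fundamental_theorem_of_calculus) auto
  have cont: "continuous_on {r..s} \<gamma>'"
  proof -
    have "continuous_on RHP (deriv f)"
      using hol_deriv[OF hol] holomorphic_on_imp_continuous_on by blast
    moreover have "continuous_on {r..s} (\<lambda>y. Complex y \<beta>)" unfolding e by (intro continuous_intros)
    moreover have "(\<lambda>y. Complex y \<beta>) ` {r..s} \<subseteq> RHP" using r by (auto simp: Complex_in_RHP)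
    ultimately show ?thesis unfolding \<gamma>'_def using continuous_on_compose2 by blast
  qed
  have int: "(\<lambda>t. norm (\<gamma>' t)) integrable_on {r..s}"
    by (intro integrable_continuous_interval continuous_intros cont)
  have "norm (\<gamma> s - \<gamma> r) \<le> integral {r..s} (\<lambda>t. norm (\<gamma>' t))"
    using integral_norm_bound_integral[OF has_integral_integrable[OF ftc] int] ftc
    by (simp add: integral_unique)
  then have "ennreal (norm (\<gamma> s - \<gamma> r)) \<le> ennreal (integral {r..s} (\<lambda>t. norm (\<gamma>' t)))"
    by (rule ennreal_leI)
  also have "\<dots> = (\<integral>\<^sup>+ t. ennreal (norm (\<gamma>' t)) * indicator {r..s} t \<partial>lborel)"
    by (rule nn_integral_has_integral_lebesgue'[symmetric]) (auto intro: integrable_integral[OF int])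
  also have "\<dots> \<le> (\<integral>\<^sup>+ t. phi f t * indicator {r..s} t \<partial>lborel)"
    by (intro nn_integral_mono mult_right_mono) (auto simp: \<gamma>'_def phi_ge)
  finally show ?thesis by (simp add: \<gamma>_def)
qed

definition tail :: "(complex \<Rightarrow> complex) \<Rightarrow> real \<Rightarrow> ennreal" where
  "tail f a = (\<integral>\<^sup>+ t. phi f t * indicator {a<..} t \<partial>lborel)"

lemma tail_0: "tail f 0 = B0_norm f" by (simp add: tail_def B0_norm_phi)

lemma tail_le_B0: "0 \<le> a \<Longrightarrow> tail f a \<le> B0_norm f"
  unfolding tail_def B0_norm_phi
  by (intro nn_integral_mono mult_left_mono) (auto simp: indicator_def)

lemma int_sub_tail:
  assumes "S \<subseteq> {a<..}" shows "(\<integral>\<^sup>+ t. phi f t * indicator S t \<partial>lborel) \<le> tail f a"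
  unfolding tail_def using assms
  by (intro nn_integral_mono mult_left_mono) (auto simp: indicator_def)

lemma small_phi:
  assumes fin: "B0_norm f < \<infinity>" and eta: "\<eta> > 0"
  shows "\<exists>T\<ge>T0. phi f T < ennreal \<eta>"
proof (rule ccontr)
  assume "\<not> ?thesis"
  then have big: "\<And>T. T \<ge> T0 \<Longrightarrow> phi f T \<ge> ennreal \<eta>" by (auto simp: not_less)
  define T1 where "T1 = max T0 1"
  obtain x where x: "B0_norm f = ennreal x" "x \<ge> 0" using fin
    by (cases "B0_norm f" rule: ennreal_cases) auto
  obtain n :: nat where n: "x / \<eta> < n" using reals_Archimedean2 by blast
  have "ennreal (\<eta> * n) = (\<integral>\<^sup>+ t. ennreal \<eta> * indicator {T1..T1 + n} t \<partial>lborel)"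
    using eta by (simp add: nn_integral_cmult_indicator ennreal_mult)
  also have "\<dots> \<le> B0_norm f"
    unfolding B0_norm_phi
    by (intro nn_integral_mono) (auto simp: indicator_def T1_def intro!: big)
  finally have "\<eta> * n \<le> x" using x eta by (simp add: ennreal_le_iff)
  then show False using n eta by (simp add: field_simps)
qed

lemma vert_bound:
  assumes hol: "f holomorphic_on RHP" and T: "T > 0" and ph: "phi f T < ennreal \<eta>"
  shows "norm (f (Complex T y1) - f (Complex T y2)) \<le> \<eta> * norm (Complex T y1 - Complex T y2)"
proof (rule field_differentiable_bound[of "closed_segment (Complex T y1) (Complex T y2)" f "deriv f"])
  have ReT: "Re u = T" if u: "u \<in> closed_segment (Complex T y1) (Complex T y2)" for u
  proof -
    obtain t where "u = (1 - t) *\<^sub>R Complex T y1 + t *\<^sub>R Complex T y2"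
      using u by (auto simp: closed_segment_def)
    then have "Re u = (1 - t) * T + t * T" by simp
    then show ?thesis by (simp add: algebra_simps)
  qed
  show "convex (closed_segment (Complex T y1) (Complex T y2))" by simp
  fix u assume u: "u \<in> closed_segment (Complex T y1) (Complex T y2)"
  then have "u \<in> RHP" using ReT T by (simp add: RHP_def)
  then show "(f has_field_derivative deriv f u) (at u within closed_segment (Complex T y1) (Complex T y2))"
    using has_deriv_RHP[OF hol] by blast
  have "ennreal (norm (deriv f u)) < ennreal \<eta>"
    using phi_ge'[of f u] ReT[OF u] ph by simp
  then show "norm (deriv f u) \<le> \<eta>" by (simp add: ennreal_less_iff less_imp_le)
qed auto

lemma osc:
  assumes hol: "f holomorphic_on RHP" and fin: "B0_norm f < \<infinity>"
    and a: "0 \<le> a" "a < Re z" "a < Re w"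
  shows "ennreal (norm (f z - f w)) \<le> 2 * tail f a"
proof (rule ennreal_le_epsilon)
  fix e :: real assume e: "0 < e"
  define D where "D = \<bar>Im z - Im w\<bar> + 1"
  have D: "D > 0" by (simp add: D_def)
  obtain T where T: "T \<ge> max (Re z) (Re w)" "phi f T < ennreal (e / D)"
    using small_phi[OF fin, of "e / D" "max (Re z) (Re w)"] e D by auto
  have T0: "T > 0" using T a by auto
  define p1 where "p1 = Complex T (Im z)"
  define p2 where "p2 = Complex T (Im w)"
  have z: "z = Complex (Re z) (Im z)" and w: "w = Complex (Re w) (Im w)" by simp_all
  have i1: "ennreal (norm (f p1 - f z)) \<le> tail f a"
  proof -
    have "ennreal (norm (f p1 - f z)) \<le> (\<integral>\<^sup>+ t. phi f t * indicator {Re z..T} t \<partial>lborel)"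
      using IB[OF hol, of "Re z" T "Im z"] a T by (simp add: p1_def)
    also have "\<dots> \<le> tail f a" using a by (intro int_sub_tail) auto
    finally show ?thesis .
  qed
  have i2: "ennreal (norm (f p2 - f w)) \<le> tail f a"
  proof -
    have "ennreal (norm (f p2 - f w)) \<le> (\<integral>\<^sup>+ t. phi f t * indicator {Re w..T} t \<partial>lborel)"
      using IB[OF hol, of "Re w" T "Im w"] a T by (simp add: p2_def)
    also have "\<dots> \<le> tail f a" using a by (intro int_sub_tail) auto
    finally show ?thesis .
  qed
  have "norm (f p1 - f p2) \<le> (e / D) * norm (p1 - p2)"
    unfolding p1_def p2_def by (rule vert_bound[OF hol T0 T(2)])
  also have "norm (p1 - p2) = \<bar>Im z - Im w\<bar>"
    by (simp add: p1_def p2_def norm_complex_def)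
  also have "(e / D) * \<bar>Im z - Im w\<bar> \<le> e"
    using e D by (simp add: D_def field_simps)
  finally have i3: "norm (f p1 - f p2) \<le> e" by simp
  have eq: "f z - f w = (f p1 - f p2) + (f p2 - f w) - (f p1 - f z)" by (simp add: algebra_simps)
  have "norm (f z - f w) \<le> norm ((f p1 - f p2) + (f p2 - f w)) + norm (f p1 - f z)"
    unfolding eq by (rule norm_triangle_ineq4)
  also have "\<dots> \<le> norm (f p1 - f p2) + norm (f p2 - f w) + norm (f p1 - f z)"
    by (intro add_right_mono norm_triangle_ineq)
  finally have tri: "norm (f z - f w) \<le> norm (f p1 - f z) + norm (f p2 - f w) + norm (f p1 - f p2)"
    by simp
  then have "ennreal (norm (f z - f w)) \<le> ennreal (norm (f p1 - f z)) + ennreal (norm (f p2 - f w)) + ennreal e"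
  proof -
    have "norm (f z - f w) \<le> norm (f p1 - f z) + norm (f p2 - f w) + e" using i3 tri by linarith
    then have "ennreal (norm (f z - f w)) \<le> ennreal (norm (f p1 - f z) + norm (f p2 - f w) + e)"
      by (rule ennreal_leI)
    then show ?thesis using e by (simp add: ennreal_plus)
  qed
  also have "\<dots> \<le> tail f a + tail f a + ennreal e" using i1 i2 by (intro add_mono) auto
  finally show "ennreal (norm (f z - f w)) \<le> 2 * tail f a + ennreal e" by (simp add: mult_2)
qed

lemma diff_at: "f holomorphic_on RHP \<Longrightarrow> z \<in> RHP \<Longrightarrow> f field_differentiable (at z)"
  using holomorphic_on_imp_differentiable_at open_RHP by blast

lemma deriv_shift_at:
  assumes "f field_differentiable (at (z + a))"
  shows "deriv (\<lambda>w. f (w + a)) z = deriv f (z + a)"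
  using deriv_compose_linear'[of f 1 z a] assms by simp

lemma ev_RHP: "z \<in> RHP \<Longrightarrow> eventually (\<lambda>y. y \<in> RHP) (nhds z)"
  using eventually_nhds_in_open open_RHP by blast

lemma deriv_cong_RHP:
  assumes "\<And>z. z \<in> RHP \<Longrightarrow> f z = g z" "z \<in> RHP"
  shows "deriv f z = deriv g z"
  by (rule deriv_cong_ev[OF eventually_mono[OF ev_RHP[OF assms(2)]]]) (auto simp: assms)

lemma sup_norm_le: "(\<And>z. z \<in> RHP \<Longrightarrow> norm (u z) \<le> M) \<Longrightarrow> sup_norm u \<le> ennreal M"
  unfolding sup_norm_def by (rule SUP_least) (auto intro: ennreal_leI)

lemma sup_norm_ge: "z \<in> RHP \<Longrightarrow> ennreal (norm (u z)) \<le> sup_norm u"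
  unfolding sup_norm_def by (rule SUP_upper)

lemma sup_norm_lt: "sup_norm u < ennreal e \<Longrightarrow> z \<in> RHP \<Longrightarrow> norm (u z) \<le> e"
proof -
  assume a: "sup_norm u < ennreal e" "z \<in> RHP"
  have "ennreal (norm (u z)) < ennreal e" using sup_norm_ge[OF a(2)] a(1) by (rule le_less_trans)
  then show ?thesis by (simp add: ennreal_less_iff)
qed

lemma bounded_B:
  assumes hol: "f holomorphic_on RHP" and fin: "B0_norm f < \<infinity>"
  shows "\<exists>M. \<forall>w\<in>RHP. norm (f w) \<le> M"
proof -
  obtain x where x: "B0_norm f = ennreal x" "x \<ge> 0" using fin
    by (cases "B0_norm f" rule: ennreal_cases) auto
  have "norm (f w) \<le> norm (f 1) + 2 * x" if w: "w \<in> RHP" for w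
  proof -
    have "ennreal (norm (f w - f 1)) \<le> 2 * tail f 0"
      using osc[OF hol fin, of 0 w 1] w by (simp add: RHP_def)
    also have "\<dots> = ennreal (2 * x)" using x by (simp add: tail_0 ennreal_mult)
    finally have "norm (f w - f 1) \<le> 2 * x" using x by (simp add: ennreal_le_iff)
    then show ?thesis using norm_triangle_ineq2[of "f w" "f 1"] by linarith
  qed
  then show ?thesis by blast
qed

lemma sup_norm_fin:
  assumes hol: "f holomorphic_on RHP" and fin: "B0_norm f < \<infinity>"
  shows "sup_norm f < \<infinity>"
proof -
  obtain M where "\<forall>w\<in>RHP. norm (f w) \<le> M" using bounded_B[OF assms] by blast
  then have "sup_norm f \<le> ennreal M" by (intro sup_norm_le) auto
  then show ?thesis using le_less_trans by fastforce
qed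

lemma nn_shift:
  fixes F :: "real \<Rightarrow> ennreal" and A :: real
  assumes [measurable]: "F \<in> borel_measurable borel"
  shows "(\<integral>\<^sup>+ x. F (x + A) \<partial>lborel) = (\<integral>\<^sup>+ x. F x \<partial>lborel)"
  using nn_integral_real_affine[OF assms, of 1 A] by (simp add: add.commute)

lemma tail_small:
  assumes hol: "f holomorphic_on RHP" and fin: "B0_norm f < \<infinity>" and e: "0 < e"
  shows "\<exists>A\<ge>A0. tail f A < e"
proof -
  define g where "g = (\<lambda>n::nat. \<lambda>t. phi f t * indicator {real n<..} t)"
  have dec: "decseq g" unfolding g_def
    by (intro decseq_SucI le_funI mult_left_mono) (auto simp: indicator_def)
  have meas: "g n \<in> borel_measurable lborel" for n
    using phi_meas_ind[OF hol, of "{real n<..}"] unfolding g_def by auto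
  have fin': "(\<integral>\<^sup>+ x. g n x \<partial>lborel) < \<infinity>" for n
    using tail_le_B0[of "real n" f] fin unfolding g_def tail_def by auto
  have "(\<integral>\<^sup>+ x. (INF n. g n x) \<partial>lborel) = (INF n. integral\<^sup>N lborel (g n))"
    by (rule nn_integral_monotone_convergence_INF_decseq[OF dec meas fin'])
  moreover have "(INF n. g n x) = 0" for x
  proof -
    obtain n :: nat where "x < n" using reals_Archimedean2 by blast
    then have "g n x = 0" by (simp add: g_def)
    then show ?thesis
    proof -
      have "(INF n. g n x) \<le> g n x" by (rule INF_lower) simp
      then show ?thesis using \<open>g n x = 0\<close> by simp
    qed
  qed
  ultimately have "(INF n. integral\<^sup>N lborel (g n)) = 0" by simp
  then have "(INF n. integral\<^sup>N lborel (g n)) < e" using e by simp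
  then obtain n where n: "integral\<^sup>N lborel (g n) < e" by (auto simp: INF_less_iff)
  define A where "A = max A0 (real n)"
  have "tail f A \<le> tail f (real n)" unfolding tail_def A_def
    by (intro nn_integral_mono mult_left_mono) (auto simp: indicator_def)
  then have "tail f A < e" using n by (simp add: g_def tail_def)
  then show ?thesis unfolding A_def by (intro exI[of _ "max A0 (real n)"]) auto
qed

definition Iz :: "(complex \<Rightarrow> complex) \<Rightarrow> real \<Rightarrow> ennreal" where
  "Iz f d = (\<integral>\<^sup>+ t. phi f t * indicator {0<..<d} t \<partial>lborel)"

lemma Iz_small:
  assumes hol: "f holomorphic_on RHP" and fin: "B0_norm f < \<infinity>" and e: "0 < e"
  shows "\<exists>d>0. Iz f d < e"
proof -
  define g where "g = (\<lambda>n::nat. \<lambda>t. phi f t * indicator {0<..<1 / Suc n} t)"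
  have dec: "decseq g" unfolding g_def
  proof (intro decseq_SucI le_funI mult_left_mono)
    fix n :: nat and x :: real
    have "1 / real (Suc (Suc n)) \<le> 1 / real (Suc n)" by (rule frac_le) auto
    then show "indicator {0<..<1 / real (Suc (Suc n))} x \<le> (indicator {0<..<1 / real (Suc n)} x :: ennreal)"
      by (auto simp: indicator_def simp del: of_nat_Suc)
  qed simp
  have meas: "g n \<in> borel_measurable lborel" for n
  proof -
    have "{0<..<1 / real (Suc n)} \<subseteq> {0<..}" by auto
    then show ?thesis using phi_meas_ind[OF hol, of "{0<..<1 / Suc n}"] unfolding g_def by simp
  qed
  have fin': "(\<integral>\<^sup>+ x. g n x \<partial>lborel) < \<infinity>" for n
  proof -
    have "(\<integral>\<^sup>+ x. g n x \<partial>lborel) \<le> B0_norm f"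
      unfolding g_def B0_norm_phi by (intro nn_integral_mono mult_left_mono) (auto simp: indicator_def)
    then show ?thesis using fin by auto
  qed
  have "(\<integral>\<^sup>+ x. (INF n. g n x) \<partial>lborel) = (INF n. integral\<^sup>N lborel (g n))"
    by (rule nn_integral_monotone_convergence_INF_decseq[OF dec meas fin'])
  moreover have "(INF n. g n x) = 0" for x
  proof (cases "x > 0")
    case True
    obtain n :: nat where "1 / x < n" using reals_Archimedean2 by blast
    then have "1 / Suc n < x" using True by (simp add: field_simps)
    then have "g n x = 0" by (simp add: g_def)
    then show ?thesis
    proof -
      have "(INF n. g n x) \<le> g n x" by (rule INF_lower) simp
      then show ?thesis using \<open>g n x = 0\<close> by simp
    qed
  next
    case False
    then have "g 0 x = 0" by (simp add: g_def)
    then show ?thesis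
    proof -
      have "(INF n. g n x) \<le> g 0 x" by (rule INF_lower) simp
      then show ?thesis using \<open>g 0 x = 0\<close> by simp
    qed
  qed
  ultimately have "(INF n. integral\<^sup>N lborel (g n)) = 0" by simp
  then have "(INF n. integral\<^sup>N lborel (g n)) < e" using e by simp
  then obtain n where n: "integral\<^sup>N lborel (g n) < e" by (auto simp: INF_less_iff)
  then show ?thesis by (intro exI[of _ "1 / Suc n"]) (simp add: g_def Iz_def)
qed

lemma B_tri3:
  assumes h1: "u1 holomorphic_on RHP" and h2: "u2 holomorphic_on RHP" and h3: "u3 holomorphic_on RHP"
    and eq: "\<And>z. z \<in> RHP \<Longrightarrow> w z = u1 z + u2 z + u3 z"
  shows "B_norm w \<le> B_norm u1 + B_norm u2 + B_norm u3"
proof -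
  have s: "sup_norm w \<le> sup_norm u1 + sup_norm u2 + sup_norm u3"
    unfolding sup_norm_def
  proof (rule SUP_least)
    fix z assume z: "z \<in> RHP"
    have "ennreal (norm (w z)) \<le> ennreal (norm (u1 z) + norm (u2 z) + norm (u3 z))"
      unfolding eq[OF z] by (intro ennreal_leI norm_triangle_le add_mono norm_triangle_ineq order_refl)
    also have "\<dots> = ennreal (norm (u1 z)) + ennreal (norm (u2 z)) + ennreal (norm (u3 z))"
      by (simp add: ennreal_plus)
    also have "\<dots> \<le> (SUP z\<in>RHP. ennreal (norm (u1 z))) + (SUP z\<in>RHP. ennreal (norm (u2 z))) + (SUP z\<in>RHP. ennreal (norm (u3 z)))"
      using z by (intro add_mono SUP_upper)
    finally show "ennreal (norm (w z)) \<le> \<dots>" .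
  qed
  have d: "deriv w z = deriv u1 z + deriv u2 z + deriv u3 z" if z: "z \<in> RHP" for z
  proof -
    have "deriv w z = deriv (\<lambda>z. u1 z + u2 z + u3 z) z" by (rule deriv_cong_RHP[OF eq z])
    also have "\<dots> = deriv u1 z + deriv u2 z + deriv u3 z"
      using diff_at[OF h1 z] diff_at[OF h2 z] diff_at[OF h3 z]
      by (simp add: field_differentiable_add)
    finally show ?thesis .
  qed
  have p: "phi w \<alpha> * indicator {0<..} \<alpha> \<le> phi u1 \<alpha> * indicator {0<..} \<alpha> + phi u2 \<alpha> * indicator {0<..} \<alpha> + phi u3 \<alpha> * indicator {0<..} \<alpha>" for \<alpha>
  proof (cases "\<alpha> > 0")
    case True
    have "phi w \<alpha> \<le> phi u1 \<alpha> + phi u2 \<alpha> + phi u3 \<alpha>"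
      unfolding phi_def
    proof (rule SUP_least)
      fix \<beta> :: real
      have z: "Complex \<alpha> \<beta> \<in> RHP" using True by (simp add: Complex_in_RHP)
      let ?z = "Complex \<alpha> \<beta>"
      have "ennreal (norm (deriv w ?z)) \<le> ennreal (norm (deriv u1 ?z) + norm (deriv u2 ?z) + norm (deriv u3 ?z))"
        unfolding d[OF z] by (intro ennreal_leI norm_triangle_le add_mono norm_triangle_ineq order_refl)
      also have "\<dots> = ennreal (norm (deriv u1 ?z)) + ennreal (norm (deriv u2 ?z)) + ennreal (norm (deriv u3 ?z))"
        by (simp add: ennreal_plus)
      also have "\<dots> \<le> (SUP \<beta>. ennreal (norm (deriv u1 (Complex \<alpha> \<beta>)))) + (SUP \<beta>. ennreal (norm (deriv u2 (Complex \<alpha> \<beta>)))) + (SUP \<beta>. ennreal (norm (deriv u3 (Complex \<alpha> \<beta>))))"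
        by (intro add_mono SUP_upper) auto
      finally show "ennreal (norm (deriv w ?z)) \<le> \<dots>" .
    qed
    then show ?thesis using True by simp
  qed simp
  have b: "B0_norm w \<le> B0_norm u1 + B0_norm u2 + B0_norm u3"
  proof -
    have "B0_norm w \<le> (\<integral>\<^sup>+ \<alpha>. phi u1 \<alpha> * indicator {0<..} \<alpha> + phi u2 \<alpha> * indicator {0<..} \<alpha> + phi u3 \<alpha> * indicator {0<..} \<alpha> \<partial>lborel)"
      unfolding B0_norm_phi by (intro nn_integral_mono p)
    also have "\<dots> = B0_norm u1 + B0_norm u2 + B0_norm u3"
      unfolding B0_norm_phi using phi_meas[OF h1] phi_meas[OF h2] phi_meas[OF h3]
      by (simp add: nn_integral_add)
    finally show ?thesis .
  qed
  show ?thesis unfolding B_norm_def using add_mono[OF s b] by (simp add: ac_simps)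
qed

lemma inv_sq_int:
  assumes b: "0 < b" and C: "0 \<le> C"
  shows "(\<integral>\<^sup>+ t. ennreal (C / t^2) * indicator {b..} t \<partial>lborel) = ennreal (C / b)"
proof -
  have h: "((\<lambda>x. 1 / x ^ 2) has_integral 1 / (real (2 - 1) * b ^ (2 - 1))) {b..}"
    using b by (intro has_integral_inverse_power_to_inf) auto
  have "((\<lambda>x. 1 / x ^ 2) has_integral 1 / b) {b..}" using h by simp
  then have "((\<lambda>x. C * (1 / x ^ 2)) has_integral C * (1 / b)) {b..}"
    by (rule has_integral_mult_right)
  then have hi: "((\<lambda>x. C / x ^ 2) has_integral C / b) {b..}" by simp
  have nn: "\<And>x. x \<in> {b..} \<Longrightarrow> 0 \<le> C / x ^ 2" using C by simp
  show ?thesis by (rule nn_integral_has_integral_lebesgue'[OF nn hi])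
qed
lemma inv_sq_int_shift:
  assumes b: "0 < b" and C: "0 \<le> C"
  shows "(\<integral>\<^sup>+ \<alpha>. ennreal (C / (\<alpha> + b)^2) * indicator {0<..} \<alpha> \<partial>lborel) \<le> ennreal (C / b)"
proof -
  define F where "F = (\<lambda>t::real. ennreal (C / t^2) * indicator {b..} t)"
  have m1: "(\<lambda>t::real. C / t^2) \<in> borel_measurable borel"
    by measurable
  have Fm: "F \<in> borel_measurable borel" unfolding F_def
    by (intro borel_measurable_times_ennreal measurable_compose[OF m1 measurable_ennreal] borel_measurable_indicator) auto
  have "(\<integral>\<^sup>+ \<alpha>. ennreal (C / (\<alpha> + b)^2) * indicator {0<..} \<alpha> \<partial>lborel) \<le> (\<integral>\<^sup>+ \<alpha>. F (\<alpha> + b) \<partial>lborel)"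
    unfolding F_def by (intro nn_integral_mono mult_left_mono) (simp_all add: indicator_def)
  also have "\<dots> = (\<integral>\<^sup>+ t. F t \<partial>lborel)" by (rule nn_shift[OF Fm])
  also have "\<dots> = ennreal (C / b)" unfolding F_def by (rule inv_sq_int[OF b C])
  finally show ?thesis .
qed

lemma seg_Re_ge:
  assumes "u \<in> closed_segment p q" "Re p \<ge> m" "Re q \<ge> m"
  shows "Re u \<ge> m"
proof -
  obtain t where t: "u = (1 - t) *\<^sub>R p + t *\<^sub>R q" "0 \<le> t" "t \<le> 1"
    using assms(1) by (auto simp: closed_segment_def)
  then have "Re u = (1 - t) * Re p + t * Re q" by simp
  also have "\<dots> \<ge> (1 - t) * m + t * m"
    using t assms by (intro add_mono mult_left_mono) auto
  finally show ?thesis by (simp add: algebra_simps)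
qed

lemma deriv_diff_bound:
  assumes hol: "h holomorphic_on RHP" and bd: "\<And>w. w \<in> RHP \<Longrightarrow> norm (h w) \<le> M"
    and m: "m > 0" and p: "Re p \<ge> m" and q: "Re q \<ge> m"
  shows "norm (deriv h p - deriv h q) \<le> 8 * M / m^2 * norm (p - q)"
proof (rule field_differentiable_bound[of "closed_segment p q" "deriv h" "deriv (deriv h)"])
  fix u assume u: "u \<in> closed_segment p q"
  have Ru: "Re u \<ge> m" by (rule seg_Re_ge[OF u p q])
  then have uR: "u \<in> RHP" using m by (simp add: RHP_def)
  show "(deriv h has_field_derivative deriv (deriv h) u) (at u within closed_segment p q)"
    using has_deriv_RHP[OF hol_deriv[OF hol] uR] .
  have "norm (deriv (deriv h) u) \<le> 8 * M / (Re u)^2" by (rule cauchy2[OF hol bd uR])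
  also have "\<dots> \<le> 8 * M / m^2"
  proof -
    have M: "M \<ge> 0" using bd[OF uR] by (meson norm_ge_zero order_trans)
    show ?thesis using Ru m M by (intro divide_left_mono mult_nonneg_nonneg power_mono) auto
  qed
  finally show "norm (deriv (deriv h) u) \<le> 8 * M / m^2" .
qed (use p q in auto)

lemma fun_diff_bound:
  assumes hol: "h holomorphic_on RHP" and bd: "\<And>w. w \<in> RHP \<Longrightarrow> norm (h w) \<le> M"
    and m: "m > 0" and p: "Re p \<ge> m" and q: "Re q \<ge> m"
  shows "norm (h p - h q) \<le> 2 * M / m * norm (p - q)"
proof (rule field_differentiable_bound[of "closed_segment p q" h "deriv h"])
  fix u assume u: "u \<in> closed_segment p q"
  have Ru: "Re u \<ge> m" by (rule seg_Re_ge[OF u p q])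
  then have uR: "u \<in> RHP" using m by (simp add: RHP_def)
  show "(h has_field_derivative deriv h u) (at u within closed_segment p q)"
    using has_deriv_RHP[OF hol uR] .
  have "norm (deriv h u) \<le> 2 * M / Re u" by (rule cauchy1[OF hol bd uR])
  also have "\<dots> \<le> 2 * M / m"
  proof -
    have M: "M \<ge> 0" using bd[OF uR] by (meson norm_ge_zero order_trans)
    show ?thesis using Ru m M by (intro divide_left_mono mult_nonneg_nonneg) auto
  qed
  finally show "norm (deriv h u) \<le> 2 * M / m" .
qed (use p q in auto)

lemma hol_shift: "h holomorphic_on RHP \<Longrightarrow> a \<ge> 0 \<Longrightarrow> (\<lambda>z. h (z + of_real a)) holomorphic_on RHP"
proof -
  assume h: "h holomorphic_on RHP" and a: "a \<ge> 0"
  have "(\<lambda>z. z + of_real a) holomorphic_on RHP" by (intro holomorphic_intros)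
  moreover have "h holomorphic_on (\<lambda>z. z + of_real a) ` RHP"
    by (rule holomorphic_on_subset[OF h]) (use a in \<open>auto simp: RHP_def\<close>)
  ultimately have "(h \<circ> (\<lambda>z. z + of_real a)) holomorphic_on RHP" by (rule holomorphic_on_compose)
  then show ?thesis by (simp add: o_def)
qed

lemma est3:
  assumes hol: "h holomorphic_on RHP" and bd: "\<And>w. w \<in> RHP \<Longrightarrow> norm (h w) \<le> M"
    and b: "0 < b" "b < A"
  shows "B_norm (\<lambda>z. h (z + of_real b) - h (z + of_real A)) \<le> ennreal (2 * M + 8 * M * (A - b) / b)"
proof -
  have "1 \<in> RHP" by (simp add: RHP_def)
  have M: "M \<ge> 0" by (rule order_trans[OF norm_ge_zero bd[OF \<open>1 \<in> RHP\<close>]])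
  define u where "u = (\<lambda>z. h (z + of_real b) - h (z + of_real A))"
  have s: "sup_norm u \<le> ennreal (2 * M)"
  proof (rule sup_norm_le)
    fix z assume z: "z \<in> RHP"
    have "norm (u z) \<le> norm (h (z + of_real b)) + norm (h (z + of_real A))"
      unfolding u_def by (rule norm_triangle_ineq4)
    also have "\<dots> \<le> M + M" using z b by (intro add_mono bd RHP_shift) auto
    finally show "norm (u z) \<le> 2 * M" by simp
  qed
  have d: "norm (deriv u z) \<le> 8 * M * (A - b) / (Re z + b)^2" if z: "z \<in> RHP" for z
  proof -
    have zb: "z + of_real b \<in> RHP" and zA: "z + of_real A \<in> RHP" using z b RHP_shift by auto
    have "deriv u z = deriv (\<lambda>z. h (z + of_real b)) z - deriv (\<lambda>z. h (z + of_real A)) z"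
      unfolding u_def
      using diff_at[OF hol_shift[OF hol, of b] z] diff_at[OF hol_shift[OF hol, of A] z] b
      by (intro deriv_diff) auto
    also have "\<dots> = deriv h (z + of_real b) - deriv h (z + of_real A)"
      using diff_at[OF hol zb] diff_at[OF hol zA] by (simp add: deriv_shift_at)
    finally have e: "deriv u z = deriv h (z + of_real b) - deriv h (z + of_real A)" .
    have "norm (deriv h (z + of_real b) - deriv h (z + of_real A)) \<le> 8 * M / (Re z + b)^2 * norm ((z + of_real b) - (z + of_real A))"
      using z b by (intro deriv_diff_bound[OF hol bd]) (auto simp: RHP_def)
    also have "norm ((z + of_real b) - (z + of_real A)) = A - b"
    proof -
      have eq: "(z + of_real b) - (z + of_real A) = - of_real (A - b)" by simp
      show ?thesis unfolding eq norm_minus_cancel norm_of_real using b by simp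
    qed
    finally show ?thesis unfolding e by simp
  qed
  have "B0_norm u \<le> (\<integral>\<^sup>+ \<alpha>. ennreal (8 * M * (A - b) / (\<alpha> + b)^2) * indicator {0<..} \<alpha> \<partial>lborel)"
    unfolding B0_norm_phi
  proof (intro nn_integral_mono)
    fix \<alpha> :: real
    show "phi u \<alpha> * indicator {0<..} \<alpha> \<le> ennreal (8 * M * (A - b) / (\<alpha> + b)^2) * indicator {0<..} \<alpha>"
    proof (cases "\<alpha> > 0")
      case True
      have "phi u \<alpha> \<le> ennreal (8 * M * (A - b) / (\<alpha> + b)^2)"
        unfolding phi_def
      proof (rule SUP_least)
        fix \<beta> :: real
        have "Complex \<alpha> \<beta> \<in> RHP" using True by (simp add: Complex_in_RHP)
        from d[OF this] show "ennreal (norm (deriv u (Complex \<alpha> \<beta>))) \<le> ennreal (8 * M * (A - b) / (\<alpha> + b)^2)"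
          by (intro ennreal_leI) simp
      qed
      then show ?thesis using True by simp
    qed simp
  qed
  also have "\<dots> \<le> ennreal (8 * M * (A - b) / b)"
    using b M by (intro inv_sq_int_shift) auto
  finally have "B_norm u \<le> ennreal (2 * M) + ennreal (8 * M * (A - b) / b)"
    unfolding B_norm_def using s by (intro add_mono) auto
  also have "\<dots> = ennreal (2 * M + 8 * M * (A - b) / b)"
    using M b by (simp add: ennreal_plus)
  finally show ?thesis unfolding u_def .
qed

lemma est1:
  assumes hol: "f holomorphic_on RHP" and fin: "B0_norm f < \<infinity>" and A: "0 \<le> A" and w: "A < Re w"
  shows "B_norm (\<lambda>z. f (z + of_real A) - c) \<le> 3 * tail f A + ennreal (norm (f w - c))"
proof -
  define u where "u = (\<lambda>z. f (z + of_real A) - c)"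
  have s: "sup_norm u \<le> 2 * tail f A + ennreal (norm (f w - c))"
    unfolding sup_norm_def
  proof (rule SUP_least)
    fix z assume z: "z \<in> RHP"
    have "norm (u z) \<le> norm (f (z + of_real A) - f w) + norm (f w - c)"
      unfolding u_def using norm_triangle_ineq[of "f (z + of_real A) - f w" "f w - c"] by simp
    then have "ennreal (norm (u z)) \<le> ennreal (norm (f (z + of_real A) - f w)) + ennreal (norm (f w - c))"
      by (simp add: ennreal_plus[symmetric] ennreal_leI del: ennreal_plus)
    also have "\<dots> \<le> 2 * tail f A + ennreal (norm (f w - c))"
      using z A w by (intro add_mono osc[OF hol fin]) (auto simp: RHP_def)
    finally show "ennreal (norm (u z)) \<le> 2 * tail f A + ennreal (norm (f w - c))" .
  qed
  define G where "G = (\<lambda>t. phi f t * indicator {A<..} t)"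
  have Gm: "G \<in> borel_measurable borel" unfolding G_def
    using A by (intro phi_meas_ind[OF hol]) auto
  have "B0_norm u \<le> (\<integral>\<^sup>+ \<alpha>. G (\<alpha> + A) \<partial>lborel)"
    unfolding B0_norm_phi
  proof (intro nn_integral_mono)
    fix \<alpha> :: real
    show "phi u \<alpha> * indicator {0<..} \<alpha> \<le> G (\<alpha> + A)"
    proof (cases "\<alpha> > 0")
      case True
      have "phi u \<alpha> \<le> phi f (\<alpha> + A)"
        unfolding phi_def
      proof (rule SUP_least)
        fix \<beta> :: real
        have z: "Complex \<alpha> \<beta> \<in> RHP" using True by (simp add: Complex_in_RHP)
        have zA: "Complex \<alpha> \<beta> + of_real A \<in> RHP" using z A by (rule RHP_shift)
        have "deriv u (Complex \<alpha> \<beta>) = deriv (\<lambda>z. f (z + of_real A)) (Complex \<alpha> \<beta>)"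
          unfolding u_def using deriv_diff[OF diff_at[OF hol_shift[OF hol A] z] field_differentiable_const[of c]]
          by simp
        also have "\<dots> = deriv f (Complex \<alpha> \<beta> + of_real A)"
          by (rule deriv_shift_at[OF diff_at[OF hol zA]])
        also have "Complex \<alpha> \<beta> + of_real A = Complex (\<alpha> + A) \<beta>" by (simp add: complex_eq_iff)
        finally have eq: "deriv u (Complex \<alpha> \<beta>) = deriv f (Complex (\<alpha> + A) \<beta>)" .
        show "ennreal (norm (deriv u (Complex \<alpha> \<beta>))) \<le> (SUP \<beta>. ennreal (norm (deriv f (Complex (\<alpha> + A) \<beta>))))"
          unfolding eq by (rule SUP_upper) simp
      qed
      then show ?thesis using True by (simp add: G_def)
    qed (simp add: G_def)
  qed
  also have "\<dots> = (\<integral>\<^sup>+ t. G t \<partial>lborel)" by (rule nn_shift[OF Gm])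
  also have "\<dots> = tail f A" by (simp add: G_def tail_def)
  finally have "B_norm u \<le> 2 * tail f A + ennreal (norm (f w - c)) + tail f A"
    unfolding B_norm_def using s by (intro add_mono) auto
  also have "\<dots> = 3 * tail f A + ennreal (norm (f w - c))"
  proof -
    have "(3::ennreal) = 2 + 1" by simp
    then show ?thesis by (simp only: distrib_right distrib_left mult_1 mult_1_right add.assoc add.commute add.left_commute mult.commute)
  qed
  finally show ?thesis unfolding u_def .
qed

lemma Iz_mono: "d1 \<le> d2 \<Longrightarrow> Iz f d1 \<le> Iz f d2"
  unfolding Iz_def by (intro nn_integral_mono mult_left_mono) (auto simp: indicator_def)

lemma est2:
  assumes hol: "f holomorphic_on RHP" and bd: "\<And>w. w \<in> RHP \<Longrightarrow> norm (f w) \<le> M"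
    and b: "0 < b" "b \<le> d"
  shows "B_norm (\<lambda>z. f z - f (z + of_real b)) \<le>
     ennreal (2 * b * M / d) + Iz f (2 * d) + (ennreal (8 * b * M / d) + Iz f (2 * d) + Iz f (2 * d))"
proof -
  have "1 \<in> RHP" by (simp add: RHP_def)
  have M: "M \<ge> 0" by (rule order_trans[OF norm_ge_zero bd[OF \<open>1 \<in> RHP\<close>]])
  have d: "d > 0" using b by simp
  define u where "u = (\<lambda>z. f z - f (z + of_real b))"
  have s: "sup_norm u \<le> ennreal (2 * b * M / d) + Iz f (2 * d)"
    unfolding sup_norm_def
  proof (rule SUP_least)
    fix z assume z: "z \<in> RHP"
    show "ennreal (norm (u z)) \<le> ennreal (2 * b * M / d) + Iz f (2 * d)"
    proof (cases "Re z \<ge> d")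
      case True
      have "norm (f z - f (z + of_real b)) \<le> 2 * M / d * norm (z - (z + of_real b))"
        using True b by (intro fun_diff_bound[OF hol bd d]) auto
      also have "norm (z - (z + of_real b)) = b" using b by simp
      finally have "norm (u z) \<le> 2 * b * M / d" by (simp add: u_def mult_ac)
      then have "ennreal (norm (u z)) \<le> ennreal (2 * b * M / d)" by (rule ennreal_leI)
      then show ?thesis by (rule order_trans) simp
    next
      case False
      have r: "0 < Re z" using z by (simp add: RHP_def)
      have "ennreal (norm (f (Complex (Re z + b) (Im z)) - f (Complex (Re z) (Im z)))) \<le>
            (\<integral>\<^sup>+ t. phi f t * indicator {Re z..Re z + b} t \<partial>lborel)"
        using r b by (intro IB[OF hol]) auto
      also have "\<dots> \<le> Iz f (2 * d)" unfolding Iz_def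
        using r b False by (intro nn_integral_mono mult_left_mono) (auto simp: indicator_def)
      also have "Complex (Re z + b) (Im z) = z + of_real b" by (simp add: complex_eq_iff)
      finally have "ennreal (norm (u z)) \<le> Iz f (2 * d)" by (simp add: u_def norm_minus_commute)
      then show ?thesis by (rule order_trans) simp
    qed
  qed
  define G where "G = (\<lambda>t. phi f t * indicator {b<..<d+b} t)"
  have Gm: "G \<in> borel_measurable borel" unfolding G_def
    using b by (intro phi_meas_ind[OF hol]) auto
  have G2: "(\<lambda>\<alpha>. G (\<alpha> + b)) \<in> borel_measurable borel"
    by (rule measurable_compose[OF _ Gm]) measurable
  have m1: "(\<lambda>t::real. ennreal (8 * b * M / t^2) * indicator {d..} t) \<in> borel_measurable borel"
    by measurable
  have m2: "(\<lambda>t. phi f t * indicator {0<..<d} t) \<in> borel_measurable borel"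
    by (intro phi_meas_ind[OF hol]) auto
  have du: "deriv u z = deriv f z - deriv f (z + of_real b)" if z: "z \<in> RHP" for z
  proof -
    have zb: "z + of_real b \<in> RHP" using z b RHP_shift by auto
    have "deriv u z = deriv f z - deriv (\<lambda>z. f (z + of_real b)) z"
      unfolding u_def using diff_at[OF hol z] diff_at[OF hol_shift[OF hol, of b] z] b
      by (intro deriv_diff) auto
    also have "deriv (\<lambda>z. f (z + of_real b)) z = deriv f (z + of_real b)"
      by (rule deriv_shift_at[OF diff_at[OF hol zb]])
    finally show ?thesis .
  qed
  have "B0_norm u \<le> (\<integral>\<^sup>+ \<alpha>. ennreal (8 * b * M / \<alpha>^2) * indicator {d..} \<alpha> + phi f \<alpha> * indicator {0<..<d} \<alpha> + G (\<alpha> + b) \<partial>lborel)"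
    unfolding B0_norm_phi
  proof (intro nn_integral_mono)
    fix \<alpha> :: real
    show "phi u \<alpha> * indicator {0<..} \<alpha> \<le> ennreal (8 * b * M / \<alpha>^2) * indicator {d..} \<alpha> + phi f \<alpha> * indicator {0<..<d} \<alpha> + G (\<alpha> + b)"
    proof (cases "\<alpha> \<ge> d")
      case True
      have a0: "\<alpha> > 0" using True d by simp
      have "phi u \<alpha> \<le> ennreal (8 * b * M / \<alpha>^2)"
        unfolding phi_def
      proof (rule SUP_least)
        fix \<beta> :: real
        have z: "Complex \<alpha> \<beta> \<in> RHP" using a0 by (simp add: Complex_in_RHP)
        have "norm (deriv f (Complex \<alpha> \<beta>) - deriv f (Complex \<alpha> \<beta> + of_real b)) \<le>
              8 * M / \<alpha>^2 * norm (Complex \<alpha> \<beta> - (Complex \<alpha> \<beta> + of_real b))"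
          using a0 b by (intro deriv_diff_bound[OF hol bd a0]) auto
        also have "norm (Complex \<alpha> \<beta> - (Complex \<alpha> \<beta> + of_real b)) = b" using b by simp
        finally have "norm (deriv u (Complex \<alpha> \<beta>)) \<le> 8 * b * M / \<alpha>^2" unfolding du[OF z] by (simp add: mult_ac)
        then show "ennreal (norm (deriv u (Complex \<alpha> \<beta>))) \<le> ennreal (8 * b * M / \<alpha>^2)"
          by (rule ennreal_leI)
      qed
      then show ?thesis using True a0 by (simp add: add.assoc) (rule add_increasing2, auto)
    next
      case False
      show ?thesis
      proof (cases "\<alpha> > 0")
        case a0: True
        have "phi u \<alpha> \<le> phi f \<alpha> + phi f (\<alpha> + b)"
          unfolding phi_def
        proof (rule SUP_least)
          fix \<beta> :: real
          have z: "Complex \<alpha> \<beta> \<in> RHP" using a0 by (simp add: Complex_in_RHP)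
          have e: "Complex \<alpha> \<beta> + of_real b = Complex (\<alpha> + b) \<beta>" by (simp add: complex_eq_iff)
          have "norm (deriv u (Complex \<alpha> \<beta>)) \<le> norm (deriv f (Complex \<alpha> \<beta>)) + norm (deriv f (Complex (\<alpha> + b) \<beta>))"
            unfolding du[OF z] e by (rule norm_triangle_ineq4)
          then have "ennreal (norm (deriv u (Complex \<alpha> \<beta>))) \<le> ennreal (norm (deriv f (Complex \<alpha> \<beta>))) + ennreal (norm (deriv f (Complex (\<alpha> + b) \<beta>)))"
            by (simp add: ennreal_plus[symmetric] ennreal_leI del: ennreal_plus)
          also have "\<dots> \<le> (SUP \<beta>. ennreal (norm (deriv f (Complex \<alpha> \<beta>)))) + (SUP \<beta>. ennreal (norm (deriv f (Complex (\<alpha> + b) \<beta>))))"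
            by (intro add_mono SUP_upper) auto
          finally show "ennreal (norm (deriv u (Complex \<alpha> \<beta>))) \<le> \<dots>" .
        qed
        moreover have "G (\<alpha> + b) = phi f (\<alpha> + b)" using a0 False by (simp add: G_def)
        ultimately show ?thesis using a0 False by (simp add: add.assoc)
      qed simp
    qed
  qed
  also have "\<dots> = (\<integral>\<^sup>+ \<alpha>. ennreal (8 * b * M / \<alpha>^2) * indicator {d..} \<alpha> \<partial>lborel) + (\<integral>\<^sup>+ \<alpha>. phi f \<alpha> * indicator {0<..<d} \<alpha> \<partial>lborel) + (\<integral>\<^sup>+ \<alpha>. G (\<alpha> + b) \<partial>lborel)"
    using m1 m2 G2 by (simp add: nn_integral_add)
  also have "\<dots> \<le> ennreal (8 * b * M / d) + Iz f (2 * d) + Iz f (2 * d)"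
  proof (intro add_mono)
    show "(\<integral>\<^sup>+ \<alpha>. ennreal (8 * b * M / \<alpha>^2) * indicator {d..} \<alpha> \<partial>lborel) \<le> ennreal (8 * b * M / d)"
      using inv_sq_int[OF d, of "8 * b * M"] b M by simp
    show "(\<integral>\<^sup>+ \<alpha>. phi f \<alpha> * indicator {0<..<d} \<alpha> \<partial>lborel) \<le> Iz f (2 * d)"
      using Iz_mono[of d "2 * d" f] d by (simp add: Iz_def)
    have "(\<integral>\<^sup>+ \<alpha>. G (\<alpha> + b) \<partial>lborel) = (\<integral>\<^sup>+ t. G t \<partial>lborel)" by (rule nn_shift[OF Gm])
    also have "\<dots> \<le> Iz f (2 * d)" unfolding G_def Iz_def
      using b by (intro nn_integral_mono mult_left_mono) (auto simp: indicator_def)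
    finally show "(\<integral>\<^sup>+ \<alpha>. G (\<alpha> + b) \<partial>lborel) \<le> Iz f (2 * d)" .
  qed
  finally have "B0_norm u \<le> ennreal (8 * b * M / d) + Iz f (2 * d) + Iz f (2 * d)" .
  then show ?thesis unfolding B_norm_def u_def[symmetric] using s by (rule add_mono[rotated])
qed

lemma main_approx:
  assumes Ysub: "\<And>g. g \<in> Y \<Longrightarrow> on_RHP g" and sub: "is_subspace Y" and si: "shift_invariant Y"
    and hol: "f holomorphic_on RHP" and fin: "B0_norm f < \<infinity>"
    and app: "\<And>\<delta>. \<delta> > 0 \<Longrightarrow> \<exists>g0\<in>Y. sup_norm (\<lambda>z. f z - g0 z) < ennreal \<delta>"
    and H: "\<And>A \<eta>. \<eta> > 0 \<Longrightarrow> \<exists>c w. const_fun c \<in> Y \<and> A < Re w \<and> norm (f w - c) < \<eta>"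
    and eps: "\<epsilon> > 0"
  shows "\<exists>g\<in>Y. B_norm (\<lambda>z. f z - g z) < ennreal \<epsilon>"
proof -
  define e where "e = \<epsilon> / 12"
  have e: "e > 0" using eps by (simp add: e_def)
  obtain M where Mb: "\<forall>w\<in>RHP. norm (f w) \<le> M" using bounded_B[OF hol fin] by blast
  have "1 \<in> RHP" by (simp add: RHP_def)
  have M0: "M \<ge> 0" using Mb \<open>1 \<in> RHP\<close> norm_ge_zero order_trans by blast
  obtain d0 where d0: "d0 > 0" "Iz f d0 < ennreal e" using Iz_small[OF hol fin, of "ennreal e"] e by auto
  define d where "d = d0 / 2"
  have d: "d > 0" "2 * d = d0" using d0 by (auto simp: d_def)
  define b where "b = min d (e * d / (10 * (M + 1)))"
  have b: "b > 0" "b \<le> d" using d e M0 by (auto simp: b_def)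
  have "b \<le> e * d / (10 * (M + 1))" by (simp add: b_def)
  then have "b * (10 * (M + 1)) \<le> e * d" using M0 by (simp add: pos_le_divide_eq)
  moreover have "10 * b * M \<le> b * (10 * (M + 1))" using b by (simp add: algebra_simps)
  ultimately have "10 * b * M \<le> e * d" by linarith
  then have bM: "10 * b * M / d \<le> e" using d by (simp add: pos_divide_le_eq)
  have bM2: "2 * b * M / d \<le> e" and bM8: "8 * b * M / d \<le> e"
  proof -
    have x0: "0 \<le> b * M / d" using b M0 d by simp
    have x1: "10 * (b * M / d) \<le> e" using bM by simp
    have l: "\<And>x k. 0 \<le> (x::real) \<Longrightarrow> 10 * x \<le> e \<Longrightarrow> k \<le> 10 \<Longrightarrow> k * x \<le> e"
      by (metis mult_right_mono order_trans)
    show "2 * b * M / d \<le> e" using l[OF x0 x1, of 2] by simp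
    show "8 * b * M / d \<le> e" using l[OF x0 x1, of 8] by simp
  qed
  define u1 where "u1 = (\<lambda>z. f z - f (z + of_real b))"
  have B1: "B_norm u1 \<le> ennreal (5 * e)"
  proof -
    have "B_norm u1 \<le> ennreal (2 * b * M / d) + Iz f (2 * d) + (ennreal (8 * b * M / d) + Iz f (2 * d) + Iz f (2 * d))"
      unfolding u1_def using Mb b by (intro est2[OF hol]) auto
    also have "\<dots> \<le> ennreal e + ennreal e + (ennreal e + ennreal e + ennreal e)"
    proof -
      have i: "Iz f (2 * d) \<le> ennreal e" using d0 d by (simp add: less_imp_le)
      show ?thesis by (intro add_mono ennreal_leI bM2 bM8 i)
    qed
    also have "\<dots> = ennreal (5 * e)" using e by (simp add: ennreal_plus[symmetric] del: ennreal_plus)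
    finally show ?thesis .
  qed
  obtain A where A: "A \<ge> b + 1" "tail f A < ennreal e" using tail_small[OF hol fin, of "ennreal e" "b + 1"] e by auto
  have A0: "A \<ge> 0" "b < A" using A b by auto
  obtain c w where cw: "const_fun c \<in> Y" "A < Re w" "norm (f w - c) < e" using H[OF e, of A] by blast
  define u2 where "u2 = (\<lambda>z. f (z + of_real A) - c)"
  have B2: "B_norm u2 \<le> ennreal (4 * e)"
  proof -
    have "B_norm u2 \<le> 3 * tail f A + ennreal (norm (f w - c))"
      unfolding u2_def by (rule est1[OF hol fin A0(1) cw(2)])
    also have "\<dots> \<le> 3 * ennreal e + ennreal e"
      using A cw by (intro add_mono mult_left_mono ennreal_leI less_imp_le) auto
    also have "\<dots> = ennreal (4 * e)"
    proof -
      have "ennreal (4 * e) = ennreal (3 * e) + ennreal e" using e by (simp add: ennreal_plus[symmetric] del: ennreal_plus)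
      also have "ennreal (3 * e) = 3 * ennreal e" using e by (simp add: ennreal_mult)
      finally show ?thesis by simp
    qed
    finally show ?thesis .
  qed
  define K where "K = 2 + 8 * (A - b) / b"
  have K: "K > 0" using A0 b by (simp add: K_def add_pos_nonneg)
  define \<delta> where "\<delta> = e / K"
  have \<delta>: "\<delta> > 0" using e K by (simp add: \<delta>_def)
  obtain g0 where g0: "g0 \<in> Y" "sup_norm (\<lambda>z. f z - g0 z) < ennreal \<delta>" using app[OF \<delta>] by blast
  define h where "h = (\<lambda>z. f z - g0 z)"
  have g0h: "g0 holomorphic_on RHP" using Ysub[OF g0(1)] by (simp add: on_RHP_def)
  have hh: "h holomorphic_on RHP" unfolding h_def using hol g0h by (intro holomorphic_intros)
  have hb: "\<And>w. w \<in> RHP \<Longrightarrow> norm (h w) \<le> \<delta>" unfolding h_def using g0(2) by (rule sup_norm_lt)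
  define u3 where "u3 = (\<lambda>z. h (z + of_real b) - h (z + of_real A))"
  have B3: "B_norm u3 \<le> ennreal e"
  proof -
    have "B_norm u3 \<le> ennreal (2 * \<delta> + 8 * \<delta> * (A - b) / b)"
      unfolding u3_def by (rule est3[OF hh hb b(1) A0(2)])
    also have "2 * \<delta> + 8 * \<delta> * (A - b) / b = \<delta> * K" by (simp add: K_def algebra_simps)
    also have "\<delta> * K = e" using K by (simp add: \<delta>_def)
    finally show ?thesis .
  qed
  define g where "g = (\<lambda>z. const_fun c z + (shift b g0 z + (-1) * shift A g0 z))"
  have gY: "g \<in> Y"
  proof -
    have add: "\<And>p q. p \<in> Y \<Longrightarrow> q \<in> Y \<Longrightarrow> (\<lambda>z. p z + q z) \<in> Y"
      using sub unfolding is_subspace_def by blast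
    have smul: "\<And>p a. p \<in> Y \<Longrightarrow> (\<lambda>z. a * p z) \<in> Y"
      using sub unfolding is_subspace_def by blast
    have s1: "shift b g0 \<in> Y" "shift A g0 \<in> Y" using si g0(1) b A0 by (auto simp: shift_invariant_def)
    have n: "(\<lambda>z. (-1) * shift A g0 z) \<in> Y" by (rule smul[OF s1(2)])
    have "(\<lambda>z. shift b g0 z + (-1) * shift A g0 z) \<in> Y" using add[OF s1(1) n] by simp
    from add[OF cw(1) this] show ?thesis unfolding g_def by simp
  qed
  have hol1: "u1 holomorphic_on RHP" unfolding u1_def using hol hol_shift[OF hol, of b] b
    by (intro holomorphic_intros) auto
  have hol2: "u2 holomorphic_on RHP" unfolding u2_def using hol_shift[OF hol A0(1)]
    by (intro holomorphic_intros) auto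
  have hol3: "u3 holomorphic_on RHP" unfolding u3_def using hol_shift[OF hh, of b] hol_shift[OF hh, of A] b A0
    by (intro holomorphic_intros) auto
  have eq: "f z - g z = u1 z + u2 z + u3 z" if z: "z \<in> RHP" for z
    using z by (simp add: g_def u1_def u2_def u3_def h_def const_fun_def shift_def RHP_def)
  have "B_norm (\<lambda>z. f z - g z) \<le> B_norm u1 + B_norm u2 + B_norm u3"
    by (rule B_tri3[OF hol1 hol2 hol3 eq])
  also have "\<dots> \<le> ennreal (5 * e) + ennreal (4 * e) + ennreal e"
    using B1 B2 B3 by (intro add_mono)
  also have "\<dots> = ennreal (10 * e)" using e by (simp add: ennreal_plus[symmetric] del: ennreal_plus)
  also have "\<dots> < ennreal \<epsilon>" using e eps by (simp add: e_def ennreal_less_iff)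
  finally show ?thesis using gY by blast
qed

lemma closure_sub:
  assumes S: "S \<subseteq> Bsp" and Ysub: "Y \<subseteq> Bsp"
  shows "B_closure_in S Y \<subseteq> S \<inter> Hinf_closure Y"
proof
  fix f assume f: "f \<in> B_closure_in S Y"
  then have fS: "f \<in> S" and ap: "\<And>\<epsilon>. \<epsilon> > 0 \<Longrightarrow> \<exists>g\<in>Y. B_norm (\<lambda>z. f z - g z) < ennreal \<epsilon>"
    by (auto simp: B_closure_in_def)
  have fB: "on_RHP f" "B0_norm f < \<infinity>" using fS S by (auto simp: Bsp_def)
  have "sup_norm f < \<infinity>" using fB by (intro sup_norm_fin) (auto simp: on_RHP_def)
  then have "f \<in> Hinf" using fB by (simp add: Hinf_def)
  moreover have "\<exists>g\<in>Y. sup_norm (\<lambda>z. f z - g z) < ennreal \<epsilon>" if e: "\<epsilon> > 0" for \<epsilon>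
  proof -
    obtain g where "g \<in> Y" "B_norm (\<lambda>z. f z - g z) < ennreal \<epsilon>" using ap[OF e] by blast
    moreover have "sup_norm (\<lambda>z. f z - g z) \<le> B_norm (\<lambda>z. f z - g z)" by (simp add: B_norm_def)
    ultimately show ?thesis using le_less_trans by blast
  qed
  ultimately show "f \<in> S \<inter> Hinf_closure Y" using fS by (simp add: Hinf_closure_def)
qed

lemma closure_sup:
  assumes S: "S \<subseteq> Bsp" and Ysub: "Y \<subseteq> Bsp" and sub: "is_subspace Y" and si: "shift_invariant Y"
    and H: "\<And>f A \<eta>. f \<in> S \<Longrightarrow> \<eta> > 0 \<Longrightarrow> \<exists>c w. const_fun c \<in> Y \<and> A < Re w \<and> norm (f w - c) < \<eta>"
  shows "S \<inter> Hinf_closure Y \<subseteq> B_closure_in S Y"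
proof
  fix f assume f: "f \<in> S \<inter> Hinf_closure Y"
  have fB: "on_RHP f" "B0_norm f < \<infinity>" using f S by (auto simp: Bsp_def)
  have app: "\<And>\<delta>. \<delta> > 0 \<Longrightarrow> \<exists>g0\<in>Y. sup_norm (\<lambda>z. f z - g0 z) < ennreal \<delta>"
    using f by (auto simp: Hinf_closure_def)
  have "\<exists>g\<in>Y. B_norm (\<lambda>z. f z - g z) < ennreal \<epsilon>" if "\<epsilon> > 0" for \<epsilon>
  proof (rule main_approx[OF _ sub si _ fB(2) app H that])
    show "\<And>g. g \<in> Y \<Longrightarrow> on_RHP g" using Ysub by (auto simp: Bsp_def)
    show "f holomorphic_on RHP" using fB by (simp add: on_RHP_def)
  qed (use f in auto)
  then show "f \<in> B_closure_in S Y" using f by (simp add: B_closure_in_def)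
qed

theorem mainTheorem6:
  shows "(\<forall>Y. Y \<subseteq> B0sp \<and> is_subspace Y \<and> shift_invariant Y \<longrightarrow>
            B_closure_in B0sp Y = B0sp \<inter> Hinf_closure Y)
       \<and> (\<forall>Z. Z \<subseteq> Bsp \<and> is_subspace Z \<and> shift_invariant Z \<and> (\<forall>c. const_fun c \<in> Z) \<longrightarrow>
            B_closure_in Bsp Z = Bsp \<inter> Hinf_closure Z)"
proof (intro conjI allI impI)
  fix Y assume Y: "Y \<subseteq> B0sp \<and> is_subspace Y \<and> shift_invariant Y"
  have S: "B0sp \<subseteq> Bsp" by (auto simp: B0sp_def)
  have Ys: "Y \<subseteq> Bsp" using Y S by blast
  have c0: "const_fun 0 \<in> Y"
  proof -
    have "const_fun 0 = (\<lambda>z. 0)" by (simp add: const_fun_def fun_eq_iff)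
    then show ?thesis using Y by (simp add: is_subspace_def)
  qed
  have H: "\<exists>c w. const_fun c \<in> Y \<and> A < Re w \<and> norm (f w - c) < \<eta>" if f: "f \<in> B0sp" and eta: "\<eta> > 0" for f A \<eta>
  proof -
    have "(f \<longlongrightarrow> 0) (filtercomap Re at_top)" using f by (simp add: B0sp_def)
    then have "eventually (\<lambda>z. dist (f z) 0 < \<eta>) (filtercomap Re at_top)"
      using eta by (simp add: tendsto_iff)
    then obtain N where N: "\<And>z. Re z \<ge> N \<Longrightarrow> dist (f z) 0 < \<eta>"
      by (auto simp: eventually_filtercomap_at_top_linorder)
    define w where "w = complex_of_real (max N A + 1)"
    have "Re w \<ge> N" "A < Re w" by (auto simp: w_def)
    then show ?thesis using N[of w] c0 by (intro exI[of _ 0] exI[of _ w]) auto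
  qed
  show "B_closure_in B0sp Y = B0sp \<inter> Hinf_closure Y"
    using closure_sub[OF S Ys] closure_sup[OF S Ys _ _ H] Y by blast
next
  fix Z assume Z: "Z \<subseteq> Bsp \<and> is_subspace Z \<and> shift_invariant Z \<and> (\<forall>c. const_fun c \<in> Z)"
  have S: "Bsp \<subseteq> Bsp" by simp
  have H: "\<exists>c w. const_fun c \<in> Z \<and> A < Re w \<and> norm (f w - c) < \<eta>" if eta: "\<eta> > 0" for f A \<eta>
    using Z eta by (intro exI[of _ "f (complex_of_real (A + 1))"] exI[of _ "complex_of_real (A + 1)"]) auto
  show "B_closure_in Bsp Z = Bsp \<inter> Hinf_closure Z"
    using closure_sub[OF S] closure_sup[OF S _ _ _ H] Z by blast
qed

end
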